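(* Let $k\ge1$ be the cache size. For any access graph $G$, \[-1+\frac1k\le\mathrm{Min}^G(\mathrm{FIFO},\mathrm{LRU})\quad\text{and}\quad\mathrm{Max}^G(\mathrm{FIFO},\mathrm{LRU})\le\frac12-\frac1{4k-2}.\]
   Context: Paging: a cache holds at most $k$ pages and is initially empty. A request to a page in the cache is a hit; otherwise it is a fault, the page is brought into the cache, evicting a page first if the cache is full. $\mathcal{A}(I)$ is the number of faults of $\mathcal{A}$ on request sequence $I$. LRU evicts the least recently requested cached page; FIFO evicts the cached page that entered the cache earliest. Access graph: a graph $G$ whose vertices are the pages; a request sequence respects $G$ if any two consecutive requests are identical or adjacent in $G$; $L(G)$ is the set of such sequences. Relative interval: $\mathrm{Min}_{\mathcal{A},\mathcal{B}}(n,G)=\min\{\mathcal{A}(I)-\mathcal{B}(I): I\in L(G),|I|=n\}$, $\mathrm{Max}_{\mathcal{A},\mathcal{B}}(n,G)$ analogously with max; $\mathrm{Min}^G(\mathcal{A},\mathcal{B})=\liminf_{n\to\infty}\mathrm{Min}_{\mathcal{A},\mathcal{B}}(n,G)/n$ and $\mathrm{Max}^G(\mathcal{A},\mathcal{B})=\limsup_{n\to\infty}\mathrm{Max}_{\mathcal{A},\mathcal{B}}(n,G)/n$. *)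

theory Defs
  imports Complex_Main "HOL-Library.Extended_Real" "HOL-Library.Liminf_Limsup"
begin

text \<open>For LRU the list is ordered by recency of
  request (most recent first); for FIFO it is ordered by time of entry
  (most recent entry first).\<close>

fun lru_run :: "nat \<Rightarrow> 'a list \<Rightarrow> 'a list \<Rightarrow> nat" where
  "lru_run k c [] = 0"
| "lru_run k c (p # ps) =
     (if p \<in> set c then lru_run k (p # remove1 p c) ps
      else Suc (lru_run k (p # (if length c < k then c else butlast c)) ps))"

fun fifo_run :: "nat \<Rightarrow> 'a list \<Rightarrow> 'a list \<Rightarrow> nat" where
  "fifo_run k c [] = 0"
| "fifo_run k c (p # ps) =
     (if p \<in> set c then fifo_run k c ps
      else Suc (fifo_run k (p # (if length c < k then c else butlast c)) ps))"

definition LRU :: "nat \<Rightarrow> 'a list \<Rightarrow> nat" where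
  "LRU k I = lru_run k [] I"

definition FIFO :: "nat \<Rightarrow> 'a list \<Rightarrow> nat" where
  "FIFO k I = fifo_run k [] I"

definition respects_graph :: "'a set \<Rightarrow> ('a \<Rightarrow> 'a \<Rightarrow> bool) \<Rightarrow> 'a list \<Rightarrow> bool" where
  "respects_graph V E I \<longleftrightarrow> set I \<subseteq> V \<and>
     (\<forall>i. Suc i < length I \<longrightarrow> I ! i = I ! (Suc i) \<or> E (I ! i) (I ! (Suc i)))"

definition MinFL :: "nat \<Rightarrow> 'a set \<Rightarrow> ('a \<Rightarrow> 'a \<Rightarrow> bool) \<Rightarrow> nat \<Rightarrow> int" where
  "MinFL k V E n = Min {int (FIFO k I) - int (LRU k I) | I. respects_graph V E I \<and> length I = n}"

definition MaxFL :: "nat \<Rightarrow> 'a set \<Rightarrow> ('a \<Rightarrow> 'a \<Rightarrow> bool) \<Rightarrow> nat \<Rightarrow> int" where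
  "MaxFL k V E n = Max {int (FIFO k I) - int (LRU k I) | I. respects_graph V E I \<and> length I = n}"

end

theory Submission
  imports Defs
begin

definition lstep :: "nat \<Rightarrow> 'a list \<Rightarrow> 'a \<Rightarrow> 'a list" where
  "lstep k c p = (if p \<in> set c then p # remove1 p c else p # (if length c < k then c else butlast c))"
definition fstep :: "nat \<Rightarrow> 'a list \<Rightarrow> 'a \<Rightarrow> 'a list" where
  "fstep k c p = (if p \<in> set c then c else p # (if length c < k then c else butlast c))"

lemma lru_run_Cons: "lru_run k c (p # ps) = (if p \<in> set c then 0 else 1) + lru_run k (lstep k c p) ps"
  by (simp add: lstep_def)
lemma fifo_run_Cons: "fifo_run k c (p # ps) = (if p \<in> set c then 0 else 1) + fifo_run k (fstep k c p) ps"
  by (simp add: fstep_def)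

lemma lstep_inv: "k \<ge> 1 \<Longrightarrow> distinct c \<Longrightarrow> length c \<le> k \<Longrightarrow> distinct (lstep k c p) \<and> length (lstep k c p) \<le> k"
  apply (cases c rule: rev_cases)
  by (auto simp: lstep_def distinct_butlast length_remove1 dest: in_set_butlastD)

lemma fstep_inv: "k \<ge> 1 \<Longrightarrow> distinct c \<Longrightarrow> length c \<le> k \<Longrightarrow> distinct (fstep k c p) \<and> length (fstep k c p) \<le> k"
  apply (cases c rule: rev_cases)
  by (auto simp: fstep_def distinct_butlast dest: in_set_butlastD)

lemma lstep_set: "set (lstep k c p) \<subseteq> insert p (set c)"
  by (auto simp: lstep_def dest: in_set_butlastD notin_set_remove1)

lemma lru_le_length: "lru_run k c I \<le> length I"
  by (induction I arbitrary: c) (auto intro: le_SucI)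

lemma tw_butlast: "length (takeWhile P xs) < length xs \<Longrightarrow> takeWhile P (butlast xs) = takeWhile P xs"
  by (induction xs) auto

lemma tw_remove1: "length (takeWhile P xs) \<le> Suc (length (takeWhile P (remove1 y xs)))"
  by (induction xs) auto

lemma full_eq:
  assumes "distinct c" "length c = k" "length d \<le> k" "set c \<subseteq> set d"
  shows "set c = set d"
proof -
  have "card (set c) = k" using assms distinct_card by blast
  moreover have "card (set d) \<le> k" using assms card_length order_trans by blast
  ultimately show ?thesis using assms(4) by (metis card_seteq finite_set)
qed

lemma tw_all: "length (takeWhile P xs) = length xs \<Longrightarrow> \<forall>x\<in>set xs. P x"
  by (metis takeWhile_eq_all_conv length_takeWhile_le nat_less_le set_takeWhileD takeWhile_eq_take take_all)


lemma stepA: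
  assumes k: "k \<ge> 1" and d: "distinct cL" "length cL \<le> k" "distinct cF" "length cF \<le> k"
  shows "(if p \<in> set cL then 0 else 1) + length (takeWhile (\<lambda>x. x \<in> set cF) cL)
     \<le> k * (if p \<in> set cF then 0 else 1) + length (takeWhile (\<lambda>x. x \<in> set (fstep k cF p)) (lstep k cL p))"
proof (cases "p \<in> set cF")
  case True
  hence fs: "fstep k cF p = cF" by (simp add: fstep_def)
  show ?thesis
  proof (cases "p \<in> set cL")
    case True
    then show ?thesis using \<open>p \<in> set cF\<close> fs tw_remove1[of "\<lambda>x. x \<in> set cF" cL p] by (simp add: lstep_def)
  next
    case False
    have "length (takeWhile (\<lambda>x. x \<in> set cF) cL) < length cL \<or> length cL < k"
    proof (rule ccontr)
      assume na: "\<not> ?thesis"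
      have eq1: "length (takeWhile (\<lambda>x. x \<in> set cF) cL) = length cL"
        using na length_takeWhile_le[of "\<lambda>x. x \<in> set cF" cL] by linarith
      have eq2: "length cL = k" using na d by linarith
      note eq = eq1 eq2
      have "set cL \<subseteq> set cF" using tw_all[OF eq(1)] by auto
      hence "set cL = set cF" using full_eq d eq(2) by blast
      thus False using False True by simp
    qed
    then show ?thesis using False True fs tw_butlast[of "\<lambda>x. x \<in> set cF" cL] by (auto simp: lstep_def)
  qed
next
  case False
  have j: "length (takeWhile (\<lambda>x. x \<in> set cF) cL) \<le> k" using d length_takeWhile_le order_trans by blast
  have "p \<in> set (fstep k cF p)" by (simp add: fstep_def)
  moreover have "\<exists>ys. lstep k cL p = p # ys" by (simp add: lstep_def)
  ultimately have "length (takeWhile (\<lambda>x. x \<in> set (fstep k cF p)) (lstep k cL p)) \<ge> 1" by auto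
  then show ?thesis using False j by auto
qed

lemma boundA:
  assumes "k \<ge> 1" "distinct cL" "length cL \<le> k" "distinct cF" "length cF \<le> k"
  shows "lru_run k cL I + length (takeWhile (\<lambda>x. x \<in> set cF) cL) \<le> k * fifo_run k cF I + k"
  using assms(2-)
proof (induction I arbitrary: cL cF)
  case Nil
  then show ?case by simp (metis length_takeWhile_le order_trans)
next
  case (Cons p I)
  have IH: "lru_run k (lstep k cL p) I + length (takeWhile (\<lambda>x. x \<in> set (fstep k cF p)) (lstep k cL p))
     \<le> k * fifo_run k (fstep k cF p) I + k"
    using Cons.IH lstep_inv[OF assms(1) Cons.prems(1,2)] fstep_inv[OF assms(1) Cons.prems(3,4)] by blast
  have S: "(if p \<in> set cL then 0 else 1) + length (takeWhile (\<lambda>x. x \<in> set cF) cL)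
     \<le> k * (if p \<in> set cF then 0 else 1) + length (takeWhile (\<lambda>x. x \<in> set (fstep k cF p)) (lstep k cL p))"
    by (rule stepA[OF assms(1) Cons.prems])
  have M: "k * ((if p \<in> set cF then 0 else 1) + fifo_run k (fstep k cF p) I)
     = k * (if p \<in> set cF then 0 else 1) + k * fifo_run k (fstep k cF p) I" by (rule distrib_left)
  show ?case unfolding lru_run_Cons fifo_run_Cons M using IH S by linarith
qed

lemma stepB:
  assumes k: "k \<ge> 1" and d: "distinct cL" "length cL \<le> k" "distinct cF" "length cF \<le> k"
  shows "(if p \<in> set cF then 0 else 1) + length (takeWhile (\<lambda>x. x \<in> set cL) cF)
     \<le> k * (if p \<in> set cL then 0 else 1) + length (takeWhile (\<lambda>x. x \<in> set (lstep k cL p)) (fstep k cF p))"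
proof (cases "p \<in> set cL")
  case True
  hence ls: "set (lstep k cL p) = set cL" proof -
    have "set (remove1 p cL) \<subseteq> set cL" by (rule set_remove1_subset)
    moreover have "set cL - {p} \<subseteq> set (remove1 p cL)"
    proof
      fix x assume "x \<in> set cL - {p}" thus "x \<in> set (remove1 p cL)" by (simp add: in_set_remove1)
    qed
    ultimately show ?thesis using True by (auto simp: lstep_def)
  qed
  show ?thesis
  proof (cases "p \<in> set cF")
    case True
    then show ?thesis using ls by (simp add: fstep_def)
  next
    case False
    have "length (takeWhile (\<lambda>x. x \<in> set cL) cF) < length cF \<or> length cF < k"
    proof (rule ccontr)
      assume na: "\<not> ?thesis"
      have eq1: "length (takeWhile (\<lambda>x. x \<in> set cL) cF) = length cF"
        using na length_takeWhile_le[of "\<lambda>x. x \<in> set cL" cF] by linarith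
      have eq2: "length cF = k" using na d by linarith
      note eq = eq1 eq2
      have "set cF \<subseteq> set cL" using tw_all[OF eq(1)] by auto
      hence "set cF = set cL" using full_eq d eq(2) by blast
      thus False using False True by simp
    qed
    then show ?thesis using False True ls tw_butlast[of "\<lambda>x. x \<in> set cL" cF] by (auto simp: fstep_def)
  qed
next
  case False
  have j: "length (takeWhile (\<lambda>x. x \<in> set cL) cF) \<le> k" using d length_takeWhile_le order_trans by blast
  show ?thesis
  proof (cases "p \<in> set cF")
    case True
    then show ?thesis using False j by auto
  next
    case F2: False
    have "p \<in> set (lstep k cL p)" by (simp add: lstep_def)
    moreover have "\<exists>ys. fstep k cF p = p # ys" using F2 by (simp add: fstep_def)
    ultimately have "length (takeWhile (\<lambda>x. x \<in> set (lstep k cL p)) (fstep k cF p)) \<ge> 1" by auto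
    then show ?thesis using False j by auto
  qed
qed

lemma boundB:
  assumes "k \<ge> 1" "distinct cL" "length cL \<le> k" "distinct cF" "length cF \<le> k"
  shows "fifo_run k cF I + length (takeWhile (\<lambda>x. x \<in> set cL) cF) \<le> k * lru_run k cL I + k"
  using assms(2-)
proof (induction I arbitrary: cL cF)
  case Nil
  then show ?case by simp (metis length_takeWhile_le order_trans)
next
  case (Cons p I)
  have IH: "fifo_run k (fstep k cF p) I + length (takeWhile (\<lambda>x. x \<in> set (lstep k cL p)) (fstep k cF p))
     \<le> k * lru_run k (lstep k cL p) I + k"
    using Cons.IH lstep_inv[OF assms(1) Cons.prems(1,2)] fstep_inv[OF assms(1) Cons.prems(3,4)] by blast
  have S: "(if p \<in> set cF then 0 else 1) + length (takeWhile (\<lambda>x. x \<in> set cL) cF)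
     \<le> k * (if p \<in> set cL then 0 else 1) + length (takeWhile (\<lambda>x. x \<in> set (lstep k cL p)) (fstep k cF p))"
    by (rule stepB[OF assms(1) Cons.prems])
  have M: "k * ((if p \<in> set cL then 0 else 1) + lru_run k (lstep k cL p) I)
     = k * (if p \<in> set cL then 0 else 1) + k * lru_run k (lstep k cL p) I" by (rule distrib_left)
  show ?case unfolding lru_run_Cons fifo_run_Cons M using IH S by linarith
qed


definition inv3 :: "'a list \<Rightarrow> 'a list \<Rightarrow> 'a set \<Rightarrow> bool" where
  "inv3 cL cF T = (\<forall>p. p \<notin> T \<and> p \<in> set cL \<longrightarrow> p \<in> set cF \<and>
      set (takeWhile (\<lambda>x. x \<noteq> p) cF) \<subseteq> set (takeWhile (\<lambda>x. x \<noteq> p) cL))"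

lemma tw_remove1_set: "p \<noteq> q \<Longrightarrow> insert q (set (takeWhile (\<lambda>x. x \<noteq> p) (remove1 q xs))) = insert q (set (takeWhile (\<lambda>x. x \<noteq> p) xs))"
  by (induction xs) auto

lemma tw_butlast2: "p \<in> set (butlast xs) \<Longrightarrow> takeWhile (\<lambda>x. x \<noteq> p) (butlast xs) = takeWhile (\<lambda>x. x \<noteq> p) xs"
  by (induction xs) auto

lemma pre_lstep:
  assumes "p \<noteq> q" "p \<in> set (lstep k cL q)"
  shows "set (takeWhile (\<lambda>x. x \<noteq> p) (lstep k cL q)) = insert q (set (takeWhile (\<lambda>x. x \<noteq> p) cL))"
proof (cases "q \<in> set cL")
  case True
  then show ?thesis using assms tw_remove1_set[OF assms(1), of cL] by (simp add: lstep_def)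
next
  case False
  show ?thesis
  proof (cases "length cL < k")
    case True
    then show ?thesis using assms False by (simp add: lstep_def)
  next
    case F2: False
    have "p \<in> set (butlast cL)" using assms False F2 by (simp add: lstep_def)
    then show ?thesis using assms False F2 tw_butlast2[of p cL] by (simp add: lstep_def)
  qed
qed

lemma tw_len_lt: "p \<in> set xs \<Longrightarrow> length (takeWhile (\<lambda>x. x \<noteq> p) xs) < length xs"
  by (induction xs) auto

lemma not_last_tw: "p \<in> set xs \<Longrightarrow> Suc (Suc (length (takeWhile (\<lambda>x. x \<noteq> p) xs))) \<le> length xs \<Longrightarrow> p \<in> set (butlast xs)"
proof (induction xs)
  case Nil
  then show ?case by simp
next
  case (Cons a xs)
  then show ?case by (cases xs) (auto split: if_splits)
qed

lemma inv3_step: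
  assumes k: "k \<ge> 1" and d: "distinct cL" "length cL \<le> k" "distinct cF" "length cF \<le> k"
    and I: "inv3 cL cF T"
  shows "inv3 (lstep k cL q) (fstep k cF q) (if q \<in> set cF then insert q T else T - {q})"
  unfolding inv3_def
proof (intro allI impI)
  fix p
  let ?T' = "if q \<in> set cF then insert q T else T - {q}"
  assume a: "p \<notin> ?T' \<and> p \<in> set (lstep k cL q)"
  show "p \<in> set (fstep k cF q) \<and>
     set (takeWhile (\<lambda>x. x \<noteq> p) (fstep k cF q)) \<subseteq> set (takeWhile (\<lambda>x. x \<noteq> p) (lstep k cL q))"
  proof (cases "p = q")
    case True
    then have "q \<notin> set cF" using a by (auto split: if_splits)
    then show ?thesis using True by (simp add: fstep_def)
  next
    case pq: False
    have pT: "p \<notin> T" using a pq by (auto split: if_splits)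
    have pL: "p \<in> set cL" using a pq lstep_set by fastforce
    have both: "p \<in> set cF \<and> set (takeWhile (\<lambda>x. x \<noteq> p) cF) \<subseteq> set (takeWhile (\<lambda>x. x \<noteq> p) cL)"
      using I pT pL unfolding inv3_def by blast
    have pF: "p \<in> set cF" using both by (rule conjunct1)
    have sub: "set (takeWhile (\<lambda>x. x \<noteq> p) cF) \<subseteq> set (takeWhile (\<lambda>x. x \<noteq> p) cL)" using both by (rule conjunct2)
    have preL: "set (takeWhile (\<lambda>x. x \<noteq> p) (lstep k cL q)) = insert q (set (takeWhile (\<lambda>x. x \<noteq> p) cL))"
      by (rule pre_lstep[OF pq conjunct2[OF a]])
    show ?thesis
    proof (cases "q \<in> set cF")
      case True
      then show ?thesis using pF sub preL by (auto simp: fstep_def)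
    next
      case qF: False
      have qnot: "q \<notin> set (takeWhile (\<lambda>x. x \<noteq> p) cF)" using qF set_takeWhileD by fastforce
      have dl: "distinct (lstep k cL q)" "length (lstep k cL q) \<le> k" using lstep_inv[OF k d(1,2)] by auto
      have "card (set (takeWhile (\<lambda>x. x \<noteq> p) (lstep k cL q))) < k"
        using tw_len_lt[of p "lstep k cL q"] a dl card_length[of "takeWhile (\<lambda>x. x \<noteq> p) (lstep k cL q)"] by linarith
      moreover have "insert q (set (takeWhile (\<lambda>x. x \<noteq> p) cF)) \<subseteq> set (takeWhile (\<lambda>x. x \<noteq> p) (lstep k cL q))"
        using preL sub by blast
      hence "card (insert q (set (takeWhile (\<lambda>x. x \<noteq> p) cF))) \<le> card (set (takeWhile (\<lambda>x. x \<noteq> p) (lstep k cL q)))"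
        by (rule card_mono[OF finite_set])
      ultimately have "card (insert q (set (takeWhile (\<lambda>x. x \<noteq> p) cF))) < k" by linarith
      hence "Suc (card (set (takeWhile (\<lambda>x. x \<noteq> p) cF))) < k" using qnot by simp
      moreover have "card (set (takeWhile (\<lambda>x. x \<noteq> p) cF)) = length (takeWhile (\<lambda>x. x \<noteq> p) cF)"
        using d(3) by (metis distinct_card distinct_takeWhile)
      ultimately have sl: "Suc (Suc (length (takeWhile (\<lambda>x. x \<noteq> p) cF))) \<le> k" by simp
      show ?thesis
      proof (cases "length cF < k")
        case True
        then show ?thesis using qF pF sub preL by (auto simp: fstep_def)
      next
        case False
        have pb: "p \<in> set (butlast cF)" using not_last_tw[OF pF] sl False by simp
        then show ?thesis using qF False sub preL tw_butlast2[OF pb] by (auto simp: fstep_def)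
      qed
    qed
  qed
qed

lemma boundC:
  assumes "k \<ge> 1" "distinct cL" "length cL \<le> k" "distinct cF" "length cF \<le> k" "inv3 cL cF T" "finite T"
  shows "2 * fifo_run k cF I \<le> length I + lru_run k cL I + card T"
  using assms(2-)
proof (induction I arbitrary: cL cF T)
  case Nil
  then show ?case by simp
next
  case (Cons q I)
  let ?T' = "if q \<in> set cF then insert q T else T - {q}"
  have IH: "2 * fifo_run k (fstep k cF q) I \<le> length I + lru_run k (lstep k cL q) I + card ?T'"
    apply (rule Cons.IH)
    using lstep_inv[OF assms(1) Cons.prems(1,2)] fstep_inv[OF assms(1) Cons.prems(3,4)]
      inv3_step[OF assms(1) Cons.prems(1-5)] Cons.prems(6) by auto
  show ?case
  proof (cases "q \<in> set cF")
    case True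
    have "card ?T' \<le> Suc (card T)" using True Cons.prems(6) by (simp add: card_insert_le_m1 card_insert_if)
    then show ?thesis using IH True unfolding lru_run_Cons fifo_run_Cons by simp
  next
    case False
    show ?thesis
    proof (cases "q \<in> set cL")
      case True
      have "q \<in> T" using Cons.prems(5) True False unfolding inv3_def by blast
      hence "Suc (card ?T') = card T" using False card_Suc_Diff1[OF Cons.prems(6)] by simp
      then show ?thesis using IH True False unfolding lru_run_Cons fifo_run_Cons by simp
    next
      case F2: False
      have "card ?T' \<le> card T" using False Cons.prems(6) by (simp add: card_Diff1_le)
      then show ?thesis using IH F2 False unfolding lru_run_Cons fifo_run_Cons by simp
    qed
  qed
qed


lemma per_seq:
  assumes k: "k \<ge> 1"
  shows "(2 * real k - 1) * (real (FIFO k I) - real (LRU k I)) \<le> (real k - 1) * real (length I) + real k"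
    and "real k * (real (FIFO k I) - real (LRU k I)) \<ge> - (real k - 1) * real (length I) - real k"
proof -
  have A: "LRU k I \<le> k * FIFO k I + k" using boundA[OF k, of "[]" "[]" I] by (simp add: LRU_def FIFO_def)
  have B: "FIFO k I \<le> k * LRU k I + k" using boundB[OF k, of "[]" "[]" I] by (simp add: LRU_def FIFO_def)
  have C: "2 * FIFO k I \<le> length I + LRU k I"
    using boundC[OF k, of "[]" "[]" "{}" I] by (simp add: LRU_def FIFO_def inv3_def)
  have D: "LRU k I \<le> length I" unfolding LRU_def by (rule lru_le_length)
  define F where "F = real (FIFO k I)"
  define L where "L = real (LRU k I)"
  define n where "n = real (length I)"
  define K where "K = real k"
  have "real (LRU k I) \<le> real (k * FIFO k I + k)" using A by (simp only: of_nat_le_iff)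
  hence A': "L \<le> K * F + K" unfolding F_def L_def K_def by simp
  have "real (FIFO k I) \<le> real (k * LRU k I + k)" using B by (simp only: of_nat_le_iff)
  hence B': "F \<le> K * L + K" unfolding F_def L_def K_def by simp
  have "real (2 * FIFO k I) \<le> real (length I + LRU k I)" using C by (simp only: of_nat_le_iff)
  hence C': "2 * F \<le> n + L" unfolding F_def L_def n_def by simp
  have D': "L \<le> n" using D unfolding L_def n_def by simp
  have K1: "K \<ge> 1" using k unfolding K_def by simp
  have "(K - 1) * (2 * F) \<le> (K - 1) * (n + L)" using C' K1 by (intro mult_left_mono) auto
  hence "(2 * K - 1) * (F - L) \<le> (K - 1) * n + K" using B' by (simp add: algebra_simps)
  thus "(2 * real k - 1) * (real (FIFO k I) - real (LRU k I)) \<le> (real k - 1) * real (length I) + real k"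
    unfolding F_def L_def n_def K_def .
  have "(K - 1) * L \<le> (K - 1) * n" using D' K1 by (intro mult_left_mono) auto
  hence "K * (F - L) \<ge> - (K - 1) * n - K" using A' by (simp add: algebra_simps)
  thus "real k * (real (FIFO k I) - real (LRU k I)) \<ge> - (real k - 1) * real (length I) - real k"
    unfolding F_def L_def n_def K_def .
qed


lemma S_props:
  assumes "finite V" "V \<noteq> {}"
  shows "finite {int (FIFO k I) - int (LRU k I) | I. respects_graph V E I \<and> length I = n}"
    and "{int (FIFO k I) - int (LRU k I) | I. respects_graph V E I \<and> length I = n} \<noteq> {}"
proof -
  let ?f = "\<lambda>I. int (FIFO k I) - int (LRU k I)"
  have sub: "{int (FIFO k I) - int (LRU k I) | I. respects_graph V E I \<and> length I = n}
     \<subseteq> ?f ` {xs. set xs \<subseteq> V \<and> length xs = n}"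
  proof
    fix x assume "x \<in> {int (FIFO k I) - int (LRU k I) | I. respects_graph V E I \<and> length I = n}"
    then obtain I where I: "x = ?f I" "respects_graph V E I" "length I = n" by blast
    hence "I \<in> {xs. set xs \<subseteq> V \<and> length xs = n}" unfolding respects_graph_def by simp
    thus "x \<in> ?f ` {xs. set xs \<subseteq> V \<and> length xs = n}" using I(1) by (rule rev_image_eqI)
  qed
  show "finite {int (FIFO k I) - int (LRU k I) | I. respects_graph V E I \<and> length I = n}"
    by (rule finite_subset[OF sub finite_imageI[OF finite_lists_length_eq[OF assms(1)]]])
  obtain v where v: "v \<in> V" using assms(2) by blast
  have "respects_graph V E (replicate n v)" using v unfolding respects_graph_def by (simp add: set_replicate_conv_if)
  hence "?f (replicate n v) \<in> {int (FIFO k I) - int (LRU k I) | I. respects_graph V E I \<and> length I = n}"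
    unfolding mem_Collect_eq by (intro exI[of _ "replicate n v"]) simp
  thus "{int (FIFO k I) - int (LRU k I) | I. respects_graph V E I \<and> length I = n} \<noteq> {}" by blast
qed

lemma frac_id:
  fixes a b c x :: real
  assumes "c \<noteq> 0" "x \<noteq> 0"
  shows "(a * x + b) / (c * x) = a / c + b / c * (1 / x)"
  using assms by (simp add: field_simps)

theorem lemma4:
  fixes k :: nat and V :: "'a set" and E :: "'a \<Rightarrow> 'a \<Rightarrow> bool"
  assumes "k \<ge> 1"
    and "finite V" and "V \<noteq> {}"
    and "\<And>u v. E u v \<Longrightarrow> u \<in> V \<and> v \<in> V"
    and "\<And>u v. E u v \<Longrightarrow> E v u"
  shows "ereal (-1 + 1 / real k) \<le> liminf (\<lambda>n. ereal (real_of_int (MinFL k V E n) / real n)) \<and>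
    limsup (\<lambda>n. ereal (real_of_int (MaxFL k V E n) / real n)) \<le> ereal (1/2 - 1 / (4 * real k - 2))"
proof
  define K where "K = real k"
  have K1: "K \<ge> 1" using assms(1) unfolding K_def by simp
  have lo: "real_of_int (MinFL k V E n) / real n \<ge> (-1 + 1 / K) - 1 / real n" if n: "n \<ge> 1" for n
  proof -
    let ?S = "{int (FIFO k I) - int (LRU k I) | I. respects_graph V E I \<and> length I = n}"
    have "MinFL k V E n \<in> ?S" unfolding MinFL_def using S_props[OF assms(2,3)] by (rule Min_in)
    then obtain I where I2: "MinFL k V E n = int (FIFO k I) - int (LRU k I)" and "respects_graph V E I" and I1: "length I = n"
      by blast
    note I = I1 I2
    have h: "K * (real (FIFO k I) - real (LRU k I)) \<ge> - (K - 1) * real n - K"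
      using per_seq(2)[OF assms(1), of I] I(1) unfolding K_def by simp
    have nn: "real n > 0" using n by simp
    have "(-1 + 1 / K) - 1 / real n = (- (K - 1) * real n - K) / (K * real n)"
      using K1 nn by (simp add: field_simps)
    also have "\<dots> \<le> (K * (real (FIFO k I) - real (LRU k I))) / (K * real n)"
      using h K1 nn by (intro divide_right_mono) auto
    also have "\<dots> = real_of_int (MinFL k V E n) / real n" using I(2) K1 by simp
    finally show ?thesis .
  qed
  have hi: "real_of_int (MaxFL k V E n) / real n \<le> (1/2 - 1 / (4 * K - 2)) + (K / (2 * K - 1)) * (1 / real n)"
    if n: "n \<ge> 1" for n
  proof -
    let ?S = "{int (FIFO k I) - int (LRU k I) | I. respects_graph V E I \<and> length I = n}"
    have "MaxFL k V E n \<in> ?S" unfolding MaxFL_def using S_props[OF assms(2,3)] by (rule Max_in)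
    then obtain I where I2: "MaxFL k V E n = int (FIFO k I) - int (LRU k I)" and "respects_graph V E I" and I1: "length I = n"
      by blast
    note I = I1 I2
    have h: "(2 * K - 1) * (real (FIFO k I) - real (LRU k I)) \<le> (K - 1) * real n + K"
      using per_seq(1)[OF assms(1), of I] I(1) unfolding K_def by simp
    have nn: "real n > 0" using n by simp
    have p: "2 * K - 1 > 0" using K1 by simp
    have "real_of_int (MaxFL k V E n) / real n = ((2 * K - 1) * (real (FIFO k I) - real (LRU k I))) / ((2 * K - 1) * real n)"
      using I(2) p by simp
    also have "\<dots> \<le> ((K - 1) * real n + K) / ((2 * K - 1) * real n)"
      using h p nn by (intro divide_right_mono) auto
    also have "\<dots> = (K - 1) / (2 * K - 1) + (K / (2 * K - 1)) * (1 / real n)"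
      using p nn by (intro frac_id) auto
    also have "(K - 1) / (2 * K - 1) = 1/2 - 1 / (4 * K - 2)"
    proof -
      have q: "4 * K - 2 = 2 * (2 * K - 1)" by simp
      show ?thesis unfolding q using p by (simp add: field_simps)
    qed
    finally show ?thesis .
  qed
  have t1: "(\<lambda>n. ereal ((-1 + 1 / K) - 1 / real n)) \<longlonglongrightarrow> ereal (-1 + 1 / K)"
  proof -
    have r: "(\<lambda>n. (-1 + 1 / K) - 1 / real n) \<longlonglongrightarrow> (-1 + 1 / K) - 0"
      by (rule tendsto_diff[OF tendsto_const lim_inverse_n'])
    show ?thesis unfolding lim_ereal using r by (simp only: diff_zero)
  qed
  have t2: "(\<lambda>n. ereal ((1/2 - 1 / (4 * K - 2)) + (K / (2 * K - 1)) * (1 / real n))) \<longlonglongrightarrow> ereal (1/2 - 1 / (4 * K - 2))"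
  proof -
    have r: "(\<lambda>n. (1/2 - 1 / (4 * K - 2)) + (K / (2 * K - 1)) * (1 / real n)) \<longlonglongrightarrow> (1/2 - 1 / (4 * K - 2)) + (K / (2 * K - 1)) * 0"
      by (rule tendsto_add[OF tendsto_const tendsto_mult[OF tendsto_const lim_inverse_n']])
    show ?thesis unfolding lim_ereal using r by (simp only: mult_zero_right add_0_right)
  qed
  have "ereal (-1 + 1 / K) = liminf (\<lambda>n. ereal ((-1 + 1 / K) - 1 / real n))"
    using lim_imp_Liminf[OF _ t1] by simp
  also have "\<dots> \<le> liminf (\<lambda>n. ereal (real_of_int (MinFL k V E n) / real n))"
    by (rule Liminf_mono) (use lo in \<open>auto simp: eventually_sequentially\<close>)
  finally show "ereal (-1 + 1 / real k) \<le> liminf (\<lambda>n. ereal (real_of_int (MinFL k V E n) / real n))"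
    unfolding K_def .
  have "limsup (\<lambda>n. ereal (real_of_int (MaxFL k V E n) / real n))
     \<le> limsup (\<lambda>n. ereal ((1/2 - 1 / (4 * K - 2)) + (K / (2 * K - 1)) * (1 / real n)))"
    by (rule Limsup_mono) (use hi in \<open>auto simp: eventually_sequentially\<close>)
  also have "\<dots> = ereal (1/2 - 1 / (4 * K - 2))"
    using lim_imp_Limsup[OF _ t2] by simp
  finally show "limsup (\<lambda>n. ereal (real_of_int (MaxFL k V E n) / real n)) \<le> ereal (1/2 - 1 / (4 * real k - 2))"
    unfolding K_def .
qed

end
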